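(* Let $V\in\mathcal{V}$, $\epsilon,c,c_1,c_2\in(0,\mathcal{L}_V(0))$, and $\alpha=\sqrt{\tau_V(c)\lambda_V(c)}$. Then \[\frac{\alpha}{\alpha+A}\,T_V\Big(c+\frac{A+\alpha}{Ae^{A\alpha}}\Big)\le\tau_V(c)\le T_V\Big(\frac{c}{1+c}\Big)\quad\forall A>0,\] and \[T_V\big(c_1+c_2e^{-T_V(\epsilon)\lambda_V(c_1)}+2\epsilon e^{-B}\big)\le T_V(\epsilon)+\frac{2B}{\lambda_V(c_2)}\quad\forall B>0.\] In particular, \[\tau_V(2\delta)\le T_V(\delta)\le\frac{6}{\delta^2}\tau_V(\delta/2)\quad\text{for all }0<\delta<\tfrac12(\mathcal{L}_V(0)\wedge1).\]
   Context: $\mathcal{V}$ is the class of non-decreasing right-continuous $V:(0,\infty)\to\mathbb{R}$ with $\lim_{\lambda\to0^+}V(\lambda)=0$, $\lim_{\lambda\to\infty}V(\lambda)<\infty$; $\mathcal{L}_V(t)=\int_{(0,\infty)}e^{-t\lambda}dV(\lambda)$. $T_V(\epsilon)=\min\{t\ge0:\mathcal{L}_V(t)\le\epsilon\}$ (with $T_V(\epsilon)=0$ if $\mathcal{L}_V(0)\le\epsilon$). For $c\in(0,\mathcal{L}_V(0))$: $\lambda_V(c)=\inf\{\lambda:V(\lambda)>c\}$, $\tau_V(c)=\sup_{\lambda\ge\lambda_V(c)}\lambda^{-1}\log(1+V(\lambda))$. $a\wedge b=\min\{a,b\}$. *)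

theory Defs
  imports "HOL-Analysis.Analysis"
begin

definition classV :: "(real \<Rightarrow> real) \<Rightarrow> bool" where
  "classV V \<longleftrightarrow> mono_on {0<..} V
     \<and> (\<forall>l>0. continuous (at_right l) V)
     \<and> (V \<longlongrightarrow> 0) (at_right 0)
     \<and> (\<exists>L. (V \<longlongrightarrow> L) at_top)"

text \<open>Extension of V by 0 on (-inf,0], so that the Lebesgue-Stieltjes measure
  dV on the real line is given by interval_measure and lives on (0,inf).\<close>
definition Vext :: "(real \<Rightarrow> real) \<Rightarrow> real \<Rightarrow> real" where
  "Vext V x = (if x \<le> 0 then 0 else V x)"

definition LV :: "(real \<Rightarrow> real) \<Rightarrow> real \<Rightarrow> real" where
  "LV V t = (LINT l:{0<..}|interval_measure (Vext V). exp (- t * l))"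

definition TV :: "(real \<Rightarrow> real) \<Rightarrow> real \<Rightarrow> real" where
  "TV V eps = (LEAST t. t \<ge> 0 \<and> LV V t \<le> eps)"

definition lamV :: "(real \<Rightarrow> real) \<Rightarrow> real \<Rightarrow> real" where
  "lamV V c = Inf {l. l > 0 \<and> V l > c}"

definition tauV :: "(real \<Rightarrow> real) \<Rightarrow> real \<Rightarrow> real" where
  "tauV V c = (SUP l\<in>{lamV V c..}. ln (1 + V l) / l)"

end

theory Submission imports Defs "HOL-Probability.Distribution_Functions"
begin


lemma aux_exp:
  fixes d x :: real
  assumes d: "0 < d" "d < 1/2" and x: "x \<ge> 2*d/5"
  shows "((6/d^2) / (6/d^2 - 1)) / exp ((6/d^2 - 1) * x) \<le> d/2"
proof -
  define r where "r = 6/d^2"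
  have "d * d \<le> (1/2) * (1/2)" using d by (intro mult_mono) auto
  then have d2: "d^2 \<le> 1/4" by (simp add: power2_eq_square)
  have d2p: "d^2 > 0" using d by simp
  have "r \<ge> 24" unfolding r_def using d2 d2p by (simp add: field_simps)
  have r1: "r - 1 \<ge> 5/d^2"
  proof -
    have "1/d^2 \<ge> 1" using d2 d2p by (simp add: field_simps)
    then show ?thesis unfolding r_def by (simp add: field_simps)
  qed
  have "(r - 1) * x \<ge> (5/d^2) * (2*d/5)"
    using r1 x d \<open>r \<ge> 24\<close> by (intro mult_mono) auto
  also have "(5/d^2) * (2*d/5) = 2/d" using d by (simp add: power2_eq_square field_simps)
  finally have z: "(r - 1) * x \<ge> 2/d" .
  have "(1 + 1/d)^2 \<le> exp (1/d)^2"
    using d by (intro power_mono exp_ge_add_one_self) (auto simp: add_pos_pos)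
  also have "exp (1/d)^2 = exp (2/d)" by (simp add: power2_eq_square exp_add[symmetric])
  also have "\<dots> \<le> exp ((r - 1) * x)" using z by simp
  finally have e: "(1 + 1/d)^2 \<le> exp ((r - 1) * x)" .
  have q: "r / (r - 1) \<le> 6/5" using \<open>r \<ge> 24\<close> by (simp add: field_simps)
  have qp: "r / (r - 1) \<ge> 0" using \<open>r \<ge> 24\<close> by simp
  have "(r / (r - 1)) / exp ((r - 1) * x) \<le> (6/5) / (1 + 1/d)^2"
  proof -
    have "1 + 1/d > 0" using d by (simp add: add_pos_pos)
    then have wpos: "0 < (1 + 1/d)^2" by simp
    show ?thesis by (rule frac_le[OF _ q wpos e]) simp
  qed
  also have "(1 + 1/d)^2 = (d + 1)^2 / d^2" using d by (simp add: field_simps power2_eq_square)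
  also have "(6/5) / ((d + 1)^2 / d^2) = 6 * d^2 / (5 * (d+1)^2)" using d by (simp add: field_simps)
  also have "\<dots> \<le> d/2"
  proof -
    have "5*(d+1)^2 - 12*d = 5*d^2 - 2*d + 5" by (simp add: power2_eq_square algebra_simps)
    moreover have "5*d^2 \<ge> 0" by simp
    ultimately have h: "12 * d \<le> 5 * (d+1)^2" using d by linarith
    have "6 * d^2 = (d/2) * (12 * d)" by (simp add: power2_eq_square)
    also have "\<dots> \<le> (d/2) * (5 * (d+1)^2)" using h d by (intro mult_left_mono) auto
    finally have "6 * d^2 \<le> (d/2) * (5 * (d+1)^2)" .
    moreover have "0 < 5 * (d+1)^2" using d by simp
    ultimately show ?thesis by (rule mult_imp_div_pos_le[rotated])
  qed
  finally show ?thesis unfolding r_def .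
qed

lemma ln_lower: fixes y :: real assumes "y > 0" shows "y / (1 + y) \<le> ln (1 + y)"
proof -
  have "ln (1 / (1 + y)) \<le> 1 / (1 + y) - 1" using assms by (intro ln_le_minus_one) auto
  moreover have "ln (1 / (1 + y)) = - ln (1 + y)" using assms by (simp add: ln_div)
  moreover have "1 / (1 + y) - 1 = - (y / (1 + y))" using assms by (simp add: field_simps)
  ultimately show ?thesis by linarith
qed

locale VV =
  fixes V :: "real \<Rightarrow> real"
  assumes cV: "classV V"
begin

definition L where "L = (SOME L. (V \<longlongrightarrow> L) at_top)"
definition F where "F = Vext V"
definition M where "M = interval_measure F"

lemma V_mono: "0 < x \<Longrightarrow> x \<le> y \<Longrightarrow> V x \<le> V y"
  using cV unfolding classV_def mono_on_def by auto

lemma V_rc: "l > 0 \<Longrightarrow> continuous (at_right l) V"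
  using cV unfolding classV_def by auto

lemma V_0: "(V \<longlongrightarrow> 0) (at_right 0)"
  using cV unfolding classV_def by auto

lemma V_lim: "(V \<longlongrightarrow> L) at_top"
proof -
  have "\<exists>L. (V \<longlongrightarrow> L) at_top" using cV unfolding classV_def by blast
  then show ?thesis unfolding L_def by (rule someI_ex)
qed

lemma V_nonneg: assumes "l > 0" shows "0 \<le> V l"
proof -
  have "\<forall>\<^sub>F x in at_right 0. V x \<le> V l"
    using assms unfolding eventually_at_right_field
    by (intro exI[of _ l]) (auto intro: V_mono)
  from tendsto_upperbound[OF V_0 this] show ?thesis by simp
qed

lemma V_le_L: assumes "l > 0" shows "V l \<le> L"
proof -
  have "\<forall>\<^sub>F x in at_top. V l \<le> V x"
    unfolding eventually_at_top_linorder using assms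
    by (intro exI[of _ l]) (auto intro: V_mono)
  from tendsto_lowerbound[OF V_lim this] show ?thesis by simp
qed

lemma L_nonneg: "0 \<le> L" using V_nonneg[of 1] V_le_L[of 1] by simp

lemma F_mono: "x \<le> y \<Longrightarrow> F x \<le> F y"
  unfolding F_def Vext_def using V_mono V_nonneg by auto

lemma F_rc: "continuous (at_right a) F"
proof (cases "a < 0")
  case True
  have "\<forall>\<^sub>F x in at_right a. F x = 0"
    unfolding eventually_at_right_field using True
    by (intro exI[of _ 0]) (auto simp: F_def Vext_def)
  moreover have "F a = 0" using True by (simp add: F_def Vext_def)
  ultimately show ?thesis unfolding continuous_within
    by (simp add: tendsto_eventually)
next
  case False
  have ev: "\<forall>\<^sub>F x in at_right a. F x = V x"
    unfolding eventually_at_right_field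
    by (intro exI[of _ "a+1"]) (use False in \<open>auto simp: F_def Vext_def\<close>)
  show ?thesis
  proof (cases "a = 0")
    case True
    then have "F a = 0" by (simp add: F_def Vext_def)
    then show ?thesis unfolding continuous_within using V_0 True tendsto_cong[OF ev]
      by simp
  next
    case False
    with \<open>\<not> a < 0\<close> have "a > 0" by simp
    then have "F a = V a" by (simp add: F_def Vext_def)
    then show ?thesis using V_rc[OF \<open>a>0\<close>] unfolding continuous_within
      by (simp add: tendsto_cong[OF ev])
  qed
qed

lemma F_bot: "(F \<longlongrightarrow> 0) at_bot"
proof -
  have "\<forall>\<^sub>F x in at_bot. F x = 0"
    unfolding eventually_at_bot_linorder by (intro exI[of _ 0]) (auto simp: F_def Vext_def)
  then show ?thesis by (rule tendsto_eventually)
qed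

lemma F_top: "(F \<longlongrightarrow> L) at_top"
proof -
  have "\<forall>\<^sub>F x in at_top. V x = F x"
    unfolding eventually_at_top_linorder by (intro exI[of _ 1]) (auto simp: F_def Vext_def)
  then show ?thesis using V_lim by (rule tendsto_cong[THEN iffD1])
qed

lemma M_fin: "finite_borel_measure M"
  unfolding M_def using finite_borel_measure_interval_measure[OF F_mono F_rc F_bot F_top L_nonneg] .

lemma M_UNIV: "emeasure M UNIV = L"
  unfolding M_def using interval_measure_UNIV[OF F_mono F_rc F_bot F_top L_nonneg] .

lemma M_Iic: "measure M {..x} = F x"
  unfolding M_def using measure_interval_measure_Iic[OF F_mono F_rc F_bot] .

lemma cdf_M: "cdf M = F"
  unfolding M_def by (rule cdf_interval_measure[OF F_mono F_rc F_bot])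

sublocale fm: finite_borel_measure M by (rule M_fin)

lemma M_UNIV': "measure M UNIV = L"
  using M_UNIV L_nonneg by (simp add: measure_def)

lemma M_Ioi0: "measure M {0<..} = L"
proof -
  have e: "{0<..} = UNIV - {..0::real}" by auto
  have "measure M (UNIV - {..0}) = measure M UNIV - measure M {..0}"
    by (rule fm.finite_measure_Diff) (auto simp: M_def)
  then have "measure M {0<..} = measure M UNIV - measure M {..0}" by (simp only: e)
  then show ?thesis using M_UNIV' M_Iic[of 0] by (simp add: F_def Vext_def)
qed

lemma sets_M[measurable_cong, simp]: "sets M = sets borel"
  by (simp add: M_def)

lemma space_M[simp]: "space M = UNIV" by (simp add: M_def)

lemma M_Ioc0: assumes "x > 0" shows "measure M {0<..x} = V x"
proof -
  have "measure M {0<..x} = F x - F 0"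
    unfolding M_def using assms by (intro measure_interval_measure_Ioc F_mono F_rc) auto
  then show ?thesis using assms by (simp add: F_def Vext_def)
qed

lemma M_Iio: assumes "a > 0" "c \<ge> 0" "\<And>x. 0<x \<Longrightarrow> x<a \<Longrightarrow> V x \<le> c"
  shows "measure M {..<a} \<le> c"
proof -
  have lim: "(F \<longlongrightarrow> measure M {..<a}) (at_left a)"
    using fm.cdf_at_left[of a] cdf_M by simp
  have ev: "\<forall>\<^sub>F x in at_left a. F x \<le> c"
    unfolding eventually_at_left_field using assms
    by (intro exI[of _ 0]) (auto simp: F_def Vext_def)
  show ?thesis by (rule tendsto_upperbound[OF lim ev]) simp
qed

lemma LV_eq: "LV V t = integral\<^sup>L M (\<lambda>l. indicator {0<..} l * exp (-t*l))"
  unfolding LV_def set_lebesgue_integral_def M_def F_def by simp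

lemma int_LV: assumes "t \<ge> 0" shows "integrable M (\<lambda>l. indicator {0<..} l * exp (-t*l))"
proof (rule fm.integrable_const_bound[where B=1])
  show "AE x in M. norm (indicator {0<..} x * exp (- t * x)) \<le> (1::real)"
    using assms by (auto simp: indicator_def mult_nonneg_nonneg)
qed simp

lemma LV_anti: assumes "0 \<le> s" "s \<le> t" shows "LV V t \<le> LV V s"
  unfolding LV_eq
proof (rule integral_mono[OF int_LV int_LV])
  fix l show "indicator {0<..} l * exp (- t * l) \<le> indicator {0<..} l * exp (- s * l)"
    using assms by (auto simp: indicator_def mult_right_mono)
qed (use assms in auto)

lemma LV_rc: assumes "t \<ge> 0" shows "(\<lambda>n. LV V (t + inverse (real (Suc n)))) \<longlonglongrightarrow> LV V t"
  unfolding LV_eq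
proof (rule integral_dominated_convergence[where w="\<lambda>l. indicator {0<..} l"])
  show "integrable M (\<lambda>l. indicator {0<..} l :: real)"
    by (rule fm.integrable_const_bound[where B=1]) auto
  show "AE x in M. (\<lambda>n. indicator {0<..} x * exp (- (t + inverse (real (Suc n))) * x))
     \<longlonglongrightarrow> indicator {0<..} x * exp (- t * x)"
  proof (rule AE_I2)
    fix x :: real
    have h: "(\<lambda>n. t + inverse (real (Suc n))) \<longlonglongrightarrow> t"
      using tendsto_add[OF tendsto_const LIMSEQ_inverse_real_of_nat, of t] by simp
    show "(\<lambda>n. indicator {0<..} x * exp (- (t + inverse (real (Suc n))) * x))
     \<longlonglongrightarrow> indicator {0<..} x * exp (- t * x)"
      by (intro tendsto_mult_left tendsto_exp tendsto_mult_right tendsto_minus h)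
  qed
  fix n show "AE x in M. norm (indicator {0<..} x * exp (- (t + inverse (real (Suc n))) * x)) \<le> indicator {0<..} x"
  proof (rule AE_I2)
    fix x :: real
    have i: "0 \<le> inverse (real (Suc n))" by simp
    have "- (t + inverse (real (Suc n))) \<le> 0" using assms i by linarith
    then have "- (t + inverse (real (Suc n))) * x \<le> 0" if "x > 0"
      using that by (intro mult_nonpos_nonneg) auto
    then show "norm (indicator {0<..} x * exp (- (t + inverse (real (Suc n))) * x)) \<le> indicator {0<..} x"
      by (auto simp: indicator_def)
  qed
qed auto

lemma LV_top: "(\<lambda>n. LV V (real n)) \<longlonglongrightarrow> 0"
proof -
  have "(\<lambda>n. integral\<^sup>L M (\<lambda>l. indicator {0<..} l * exp (- real n * l))) \<longlonglongrightarrow> integral\<^sup>L M (\<lambda>l. 0::real)"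
  proof (rule integral_dominated_convergence[where w="\<lambda>l. indicator {0<..} l"])
    show "integrable M (\<lambda>l. indicator {0<..} l :: real)"
      by (rule fm.integrable_const_bound[where B=1]) auto
    show "AE x in M. (\<lambda>n. indicator {0<..} x * exp (- real n * x)) \<longlonglongrightarrow> 0"
    proof (rule AE_I2)
      fix x :: real
      show "(\<lambda>n. indicator {0<..} x * exp (- real n * x)) \<longlonglongrightarrow> 0"
      proof (cases "x > 0")
        case True
        have "(\<lambda>n. exp (- x) ^ n) \<longlonglongrightarrow> 0" using True by (intro LIMSEQ_power_zero) auto
        moreover have "exp (- real n * x) = exp (- x) ^ n" for n
          by (simp add: exp_of_nat_mult[symmetric])
        ultimately show ?thesis using True by simp
      qed simp
    qed
    fix n show "AE x in M. norm (indicator {0<..} x * exp (- real n * x)) \<le> indicator {0<..} x"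
      by (intro AE_I2) (auto simp: indicator_def)
  qed auto
  then show ?thesis unfolding LV_eq by simp
qed

lemma TV_props:
  assumes "eps > 0"
  shows "TV V eps \<ge> 0" "LV V (TV V eps) \<le> eps" "\<And>t. t \<ge> 0 \<Longrightarrow> LV V t \<le> eps \<Longrightarrow> TV V eps \<le> t"
proof -
  define S where "S = {t. t \<ge> 0 \<and> LV V t \<le> eps}"
  have "\<forall>\<^sub>F n in sequentially. LV V (real n) < eps"
    using LV_top assms by (rule order_tendstoD)
  then obtain N where "\<forall>n\<ge>N. LV V (real n) < eps" unfolding eventually_sequentially by blast
  then have "LV V (real N) < eps" by simp
  then have "real N \<in> S" unfolding S_def by simp
  then have ne: "S \<noteq> {}" by blast
  have bdd: "bdd_below S" unfolding S_def by (rule bdd_belowI[of _ 0]) auto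
  define t0 where "t0 = Inf S"
  have t0: "t0 \<ge> 0" unfolding t0_def using ne by (intro cInf_greatest) (auto simp: S_def)
  have "LV V (t0 + inverse (real (Suc n))) \<le> eps" for n
  proof -
    have "t0 < t0 + inverse (real (Suc n))" by simp
    then obtain s where s: "s \<in> S" "s < t0 + inverse (real (Suc n))"
      using cInf_lessD[OF ne] unfolding t0_def by blast
    then have "LV V (t0 + inverse (real (Suc n))) \<le> LV V s"
      by (intro LV_anti) (auto simp: S_def)
    then show ?thesis using s by (auto simp: S_def)
  qed
  then have t0e: "LV V t0 \<le> eps"
    by (intro LIMSEQ_le_const2[OF LV_rc[OF t0]]) auto
  have least: "\<And>t. t \<ge> 0 \<Longrightarrow> LV V t \<le> eps \<Longrightarrow> t0 \<le> t"
    unfolding t0_def using bdd by (intro cInf_lower) (auto simp: S_def)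
  have "TV V eps = t0" unfolding TV_def
    by (rule Least_equality) (use t0 t0e least in auto)
  then show "TV V eps \<ge> 0" "LV V (TV V eps) \<le> eps" "\<And>t. t \<ge> 0 \<Longrightarrow> LV V t \<le> eps \<Longrightarrow> TV V eps \<le> t"
    using t0 t0e least by auto
qed

lemma LV0: "LV V 0 = L"
  unfolding LV_eq using M_Ioi0 by simp

lemma lam_props:
  assumes "0 < c" "c < L"
  shows "lamV V c > 0" "c \<le> V (lamV V c)" "\<And>l. 0 < l \<Longrightarrow> l < lamV V c \<Longrightarrow> V l \<le> c"
    "\<And>l. l > lamV V c \<Longrightarrow> c < V l"
proof -
  define S where "S = {l. l > 0 \<and> V l > c}"
  have "\<forall>\<^sub>F x in at_top. c < V x" using V_lim assms(2) by (rule order_tendstoD)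
  then obtain N where N: "\<And>x. x \<ge> N \<Longrightarrow> c < V x" unfolding eventually_at_top_linorder by blast
  have "max N 1 \<in> S" unfolding S_def using N[of "max N 1"] by simp
  then have ne: "S \<noteq> {}" by blast
  have bdd: "bdd_below S" unfolding S_def by (rule bdd_belowI[of _ 0]) auto
  have lam: "lamV V c = Inf S" unfolding lamV_def S_def by simp
  show gt: "\<And>l. l > lamV V c \<Longrightarrow> c < V l"
  proof -
    fix l assume "l > lamV V c"
    then obtain s where s: "s \<in> S" "s < l" using cInf_lessD[OF ne] lam by metis
    then have "V s \<le> V l" by (intro V_mono) (auto simp: S_def)
    then show "c < V l" using s by (auto simp: S_def)
  qed
  show lt: "\<And>l. 0 < l \<Longrightarrow> l < lamV V c \<Longrightarrow> V l \<le> c"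
  proof (rule ccontr)
    fix l assume l: "0 < l" "l < lamV V c" "\<not> V l \<le> c"
    then have "l \<in> S" by (auto simp: S_def)
    then have "Inf S \<le> l" using bdd by (rule cInf_lower)
    then show False using l lam by simp
  qed
  have "\<forall>\<^sub>F x in at_right 0. V x < c" using V_0 assms(1) by (rule order_tendstoD)
  then obtain b where b: "b > 0" "\<And>y. y > 0 \<Longrightarrow> y < b \<Longrightarrow> V y < c"
    unfolding eventually_at_right_field by blast
  have "b \<le> Inf S"
  proof (rule cInf_greatest[OF ne])
    fix s assume "s \<in> S"
    show "b \<le> s"
    proof (rule ccontr)
      assume "\<not> b \<le> s"
      then show False using b(2)[of s] \<open>s \<in> S\<close> by (auto simp: S_def)
    qed
  qed
  then show pos: "lamV V c > 0" using b lam by simp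
  have ev: "\<forall>\<^sub>F x in at_right (lamV V c). c \<le> V x"
    unfolding eventually_at_right_field
    by (intro exI[of _ "lamV V c + 1"]) (auto intro: less_imp_le gt)
  have lim: "(V \<longlongrightarrow> V (lamV V c)) (at_right (lamV V c))"
    using V_rc[OF pos] unfolding continuous_within .
  show "c \<le> V (lamV V c)" by (rule tendsto_lowerbound[OF lim ev]) simp
qed

lemma tau_props:
  assumes "0 < c" "c < L"
  shows "\<And>l. l \<ge> lamV V c \<Longrightarrow> ln (1 + V l) / l \<le> tauV V c"
    "\<And>X. (\<And>l. l \<ge> lamV V c \<Longrightarrow> ln (1 + V l) / l \<le> X) \<Longrightarrow> tauV V c \<le> X"
    "tauV V c > 0"
    "\<And>l. l \<ge> lamV V c \<Longrightarrow> V l \<le> exp (tauV V c * l) - 1"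
proof -
  note lp = lam_props[OF assms]
  have bdd: "bdd_above ((\<lambda>l. ln (1 + V l) / l) ` {lamV V c..})"
  proof (rule bdd_aboveI2)
    fix l assume "l \<in> {lamV V c..}"
    then have l: "l \<ge> lamV V c" "l > 0" using lp(1) by auto
    have "0 \<le> V l" "V l \<le> L" using V_nonneg V_le_L l by auto
    then have "ln (1 + V l) \<le> ln (1 + L)" "0 \<le> ln (1 + V l)" by auto
    then show "ln (1 + V l) / l \<le> ln (1 + L) / lamV V c"
      using l lp(1) by (intro frac_le) auto
  qed
  show up: "\<And>l. l \<ge> lamV V c \<Longrightarrow> ln (1 + V l) / l \<le> tauV V c"
    unfolding tauV_def by (rule cSUP_upper[OF _ bdd]) auto
  show "\<And>X. (\<And>l. l \<ge> lamV V c \<Longrightarrow> ln (1 + V l) / l \<le> X) \<Longrightarrow> tauV V c \<le> X"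
    unfolding tauV_def by (rule cSUP_least) auto
  have "0 < ln (1 + V (lamV V c)) / lamV V c"
    using lp(1,2) assms(1) by (intro divide_pos_pos ln_gt_zero) auto
  then show "tauV V c > 0" using up[of "lamV V c"] by simp
  show "\<And>l. l \<ge> lamV V c \<Longrightarrow> V l \<le> exp (tauV V c * l) - 1"
  proof -
    fix l assume l: "l \<ge> lamV V c"
    then have lpos: "l > 0" using lp(1) by simp
    have "ln (1 + V l) \<le> tauV V c * l"
      using up[OF l] lpos by (simp add: pos_divide_le_eq)
    then have "exp (ln (1 + V l)) \<le> exp (tauV V c * l)" by simp
    moreover have "exp (ln (1 + V l)) = 1 + V l" using V_nonneg[OF lpos] by simp
    ultimately show "V l \<le> exp (tauV V c * l) - 1" by simp
  qed
qed

lemma pair_sf: "pair_sigma_finite M lborel"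
  unfolding pair_sigma_finite_def
  using fm.sigma_finite_measure_axioms sigma_finite_lborel by simp

lemma tail_bound:
  assumes lam: "lam > 0" and tau: "\<tau> \<ge> 0" and t: "t > \<tau>"
    and Vb: "\<And>l. l \<ge> lam \<Longrightarrow> V l \<le> exp (\<tau> * l)"
  shows "integral\<^sup>L M (\<lambda>l. indicator {lam..} l * exp (-t*l)) \<le> t * (exp (-(t-\<tau>)*lam) / (t-\<tau>))"
proof -
  interpret p: pair_sigma_finite M lborel by (rule pair_sf)
  have tpos: "t > 0" using tau t by simp
  define f where "f = (\<lambda>l::real. indicator {lam..} l * exp (-t*l))"
  define G :: "real \<Rightarrow> real \<Rightarrow> ennreal" where "G = (\<lambda>l s. if lam \<le> l \<and> l \<le> s then ennreal (t * exp (- t * s)) else 0)"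
  have intf: "integrable M f"
  proof (rule fm.integrable_const_bound[where B=1])
    show "AE x in M. norm (f x) \<le> 1"
      using lam tpos by (auto simp: f_def indicator_def mult_nonneg_nonneg)
  qed (simp add: f_def)
  have "ennreal (integral\<^sup>L M f) = (\<integral>\<^sup>+ l. ennreal (f l) \<partial>M)"
    by (rule nn_integral_eq_integral[symmetric, OF intf]) (auto simp: f_def)
  also have "\<dots> = (\<integral>\<^sup>+ l. (\<integral>\<^sup>+ s. G l s \<partial>lborel) \<partial>M)"
  proof (rule nn_integral_cong)
    fix l :: real
    show "ennreal (f l) = (\<integral>\<^sup>+ s. G l s \<partial>lborel)"
    proof (cases "lam \<le> l")
      case True
      have hi: "((\<lambda>s. t * exp (- t * s)) has_integral (t * (exp (-t*l)/t))) {l..}"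
        by (rule has_integral_mult_right[OF has_integral_exp_minus_to_infinity[OF tpos]])
      have "(\<integral>\<^sup>+ s. G l s \<partial>lborel) = (\<integral>\<^sup>+ s. ennreal (t * exp (- t * s)) * indicator {l..} s \<partial>lborel)"
        using True by (intro nn_integral_cong) (auto simp: G_def indicator_def)
      also have "\<dots> = ennreal (t * (exp (-t*l)/t))"
        by (rule nn_integral_has_integral_lebesgue'[OF _ hi]) (use tpos in auto)
      finally show ?thesis using True tpos by (simp add: f_def)
    next
      case False
      then show ?thesis by (simp add: G_def f_def)
    qed
  qed
  also have "\<dots> = (\<integral>\<^sup>+ s. (\<integral>\<^sup>+ l. G l s \<partial>M) \<partial>lborel)"
  proof (rule p.Fubini'[symmetric])
    show "case_prod G \<in> borel_measurable (M \<Otimes>\<^sub>M lborel)"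
      unfolding G_def by measurable
  qed
  also have "\<dots> \<le> (\<integral>\<^sup>+ s. ennreal (t * exp (-(t-\<tau>) * s)) * indicator {lam..} s \<partial>lborel)"
  proof (rule nn_integral_mono)
    fix s :: real
    have "(\<integral>\<^sup>+ l. G l s \<partial>M) = (\<integral>\<^sup>+ l. ennreal (t * exp (- t * s)) * indicator {lam..s} l \<partial>M)"
      by (intro nn_integral_cong) (auto simp: G_def indicator_def)
    also have "\<dots> = ennreal (t * exp (- t * s)) * emeasure M {lam..s}"
      by (rule nn_integral_cmult_indicator) simp
    also have "\<dots> \<le> ennreal (t * exp (-(t-\<tau>) * s)) * indicator {lam..} s"
    proof (cases "lam \<le> s")
      case True
      have "emeasure M {lam..s} \<le> emeasure M {..s}"
        by (rule emeasure_mono) auto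
      also have "\<dots> = ennreal (F s)"
        using M_Iic[of s] fm.emeasure_eq_measure by simp
      also have "F s = V s" using True lam by (simp add: F_def Vext_def)
      also have "ennreal (V s) \<le> ennreal (exp (\<tau> * s))" using Vb[OF True] by (simp add: ennreal_leI)
      finally have "ennreal (t * exp (- t * s)) * emeasure M {lam..s} \<le> ennreal (t * exp (- t * s)) * ennreal (exp (\<tau> * s))"
        by (rule mult_left_mono) simp
      also have "\<dots> = ennreal (t * exp (-(t-\<tau>) * s))"
        using tpos by (simp add: ennreal_mult'[symmetric] exp_add[symmetric] algebra_simps)
      finally show ?thesis using True by simp
    next
      case False
      then show ?thesis by simp
    qed
    finally show "(\<integral>\<^sup>+ l. G l s \<partial>M) \<le> ennreal (t * exp (-(t-\<tau>) * s)) * indicator {lam..} s" .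
  qed
  also have "\<dots> = ennreal (t * (exp (-(t-\<tau>)*lam) / (t-\<tau>)))"
  proof (rule nn_integral_has_integral_lebesgue')
    show "((\<lambda>s. t * exp (-(t-\<tau>) * s)) has_integral (t * (exp (-(t-\<tau>)*lam) / (t-\<tau>)))) {lam..}"
      using t by (intro has_integral_mult_right has_integral_exp_minus_to_infinity) simp
  qed (use tpos in auto)
  finally have "ennreal (integral\<^sup>L M f) \<le> ennreal (t * (exp (-(t-\<tau>)*lam) / (t-\<tau>)))" .
  then show ?thesis using t tpos unfolding f_def[symmetric]
    by (subst (asm) ennreal_le_iff) auto
qed

lemma int_ind: "integrable M (\<lambda>x. indicator A x :: real)" if "A \<in> sets borel"
  by (rule fm.integrable_const_bound[where B=1]) (use that in auto)

lemma int_ind_c: "integral\<^sup>L M (\<lambda>x. indicator A x * k) = measure M A * k" if "A \<in> sets borel"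
  using that by (simp add: integral_mult_left_zero)

lemma TV_le: assumes "eps > 0" "t \<ge> 0" "LV V t \<le> eps" shows "TV V eps \<le> t"
  using TV_props(3)[OF assms(1)] assms by auto

lemma TV_anti: assumes "0 < e1" "e1 \<le> e2" shows "TV V e2 \<le> TV V e1"
  using TV_le[of e2 "TV V e1"] TV_props[OF assms(1)] assms by auto

lemma LV_lower: assumes "T \<ge> 0" "l > 0" shows "V l * exp (-T*l) \<le> LV V T"
proof -
  have "V l * exp (-T*l) = integral\<^sup>L M (\<lambda>x. indicator {0<..l} x * exp (-T*l))"
    using int_ind_c[of "{0<..l}" "exp (-T*l)"] M_Ioc0[OF assms(2)] by simp
  also have "\<dots> \<le> integral\<^sup>L M (\<lambda>x. indicator {0<..} x * exp (-T*x))"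
  proof (rule integral_mono)
    show "integrable M (\<lambda>x. indicator {0<..l} x * exp (-T*l))"
      using int_ind[of "{0<..l}"] by simp
    show "integrable M (\<lambda>x. indicator {0<..} x * exp (-T*x))" by (rule int_LV[OF assms(1)])
    fix x :: real
    show "indicator {0<..l} x * exp (-T*l) \<le> indicator {0<..} x * exp (-T*x)"
    proof (cases "0 < x \<and> x \<le> l")
      case True
      then have "-T*l \<le> -T*x" using assms by (intro mult_left_mono_neg) auto
      then show ?thesis using True by (simp add: indicator_def)
    next
      case False
      then show ?thesis by (auto simp: indicator_def)
    qed
  qed
  finally show ?thesis unfolding LV_eq .
qed

lemma claimA: assumes "0 < c" "c < L" shows "tauV V c \<le> TV V (c / (1 + c))"
proof (rule tau_props(2)[OF assms])
  fix l assume l: "lamV V c \<le> l"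
  note lp = lam_props[OF assms]
  define T where "T = TV V (c / (1 + c))"
  have ep: "c / (1+c) > 0" using assms by simp
  have T0: "T \<ge> 0" and LT: "LV V T \<le> c / (1+c)" using TV_props[OF ep] by (auto simp: T_def)
  have lpos: "l > 0" using l lp(1) by simp
  have Vc: "c \<le> V l"
  proof (cases "l = lamV V c")
    case True then show ?thesis using lp(2) by simp
  next
    case False then show ?thesis using lp(4)[of l] l by simp
  qed
  define E where "E = exp (T*l)"
  have Epos: "E > 0" by (simp add: E_def)
  have "V l * exp (-T*l) \<le> c / (1+c)" using LV_lower[OF T0 lpos] LT by simp
  moreover have "exp (-T*l) = 1 / E" by (simp add: E_def exp_minus field_simps)
  ultimately have "V l / E \<le> c / (1+c)" by simp
  then have "V l * (1 + c) \<le> c * E" using Epos assms by (simp add: field_simps)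
  moreover have "c * (1 + V l) \<le> V l * (1 + c)" using Vc by (simp add: algebra_simps)
  ultimately have "c * (1 + V l) \<le> c * E" by linarith
  then have "1 + V l \<le> E" using assms by simp
  then have "ln (1 + V l) \<le> ln E" using V_nonneg[OF lpos] by (subst ln_le_cancel_iff) auto
  then have "ln (1 + V l) \<le> T * l" by (simp add: E_def)
  then show "ln (1 + V l) / l \<le> T" using lpos by (simp add: pos_divide_le_eq)
qed

lemma claimB':
  assumes "0 < c" "c < L" "A > 0"
  defines "\<alpha> \<equiv> sqrt (tauV V c * lamV V c)"
  shows "\<alpha> > 0" "TV V (c + (A + \<alpha>) / (A * exp (A * \<alpha>))) \<le> tauV V c * (\<alpha> + A) / \<alpha>"
proof -
  note lp = lam_props[OF assms(1,2)]
  note tp = tau_props[OF assms(1,2)]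
  define \<tau> where "\<tau> = tauV V c"
  define lam where "lam = lamV V c"
  have tpos: "\<tau> > 0" using tp(3) by (simp add: \<tau>_def)
  have lpos: "lam > 0" using lp(1) by (simp add: lam_def)
  have apos: "\<alpha> > 0" unfolding \<alpha>_def using tpos lpos by (simp add: \<tau>_def lam_def)
  then show "\<alpha> > 0" .
  have asq: "\<alpha> * \<alpha> = \<tau> * lam" unfolding \<alpha>_def \<tau>_def lam_def
    using tpos lpos by (simp add: \<tau>_def lam_def)
  define t where "t = \<tau> * (\<alpha> + A) / \<alpha>"
  have tmt: "t - \<tau> = A * \<tau> / \<alpha>" using apos by (simp add: t_def field_simps)
  have "A * \<tau> / \<alpha> > 0" using assms(3) tpos apos by simp
  then have tgt: "t > \<tau>" using tmt by linarith
  have t0: "t \<ge> 0" using tgt tpos by simp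
  have e1: "(t - \<tau>) * lam = A * \<alpha>"
  proof -
    have "(t - \<tau>) * lam = A * (\<tau> * lam) / \<alpha>" using tmt by simp
    also have "\<dots> = A * (\<alpha> * \<alpha>) / \<alpha>" using asq by simp
    also have "\<dots> = A * \<alpha>" using apos by simp
    finally show ?thesis .
  qed
  have e2: "t / (t - \<tau>) = (A + \<alpha>) / A"
    using apos tpos assms(3) by (simp add: tmt t_def field_simps)
  have Vb: "\<And>l. l \<ge> lam \<Longrightarrow> V l \<le> exp (\<tau> * l)"
    using tp(4) by (fastforce simp: \<tau>_def lam_def)
  have tail: "integral\<^sup>L M (\<lambda>l. indicator {lam..} l * exp (-t*l)) \<le> t * (exp (-(t-\<tau>)*lam) / (t-\<tau>))"
    by (rule tail_bound[OF lpos _ tgt Vb]) (use tpos in auto)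
  have "t * (exp (-(t-\<tau>)*lam) / (t-\<tau>)) = (t / (t - \<tau>)) * exp (-((t-\<tau>)*lam))" by (simp add: algebra_simps)
  also have "\<dots> = (A + \<alpha>) / (A * exp (A * \<alpha>))" unfolding e1 e2 by (simp add: exp_minus field_simps)
  finally have tail': "integral\<^sup>L M (\<lambda>l. indicator {lam..} l * exp (-t*l)) \<le> (A + \<alpha>) / (A * exp (A * \<alpha>))"
    using tail by simp
  have mI: "measure M {..<lam} \<le> c"
    using M_Iio[OF lpos, of c] lp(3) assms(1) by (simp add: lam_def)
  have "LV V t \<le> integral\<^sup>L M (\<lambda>x. indicator {..<lam} x + indicator {lam..} x * exp (-t*x))"
    unfolding LV_eq
  proof (rule integral_mono)
    show "integrable M (\<lambda>x. indicator {0<..} x * exp (- t * x))" by (rule int_LV[OF t0])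
    show "integrable M (\<lambda>x. indicator {..<lam} x + indicator {lam..} x * exp (-t*x))"
    proof (rule Bochner_Integration.integrable_add)
      show "integrable M (\<lambda>x. indicator {..<lam} x :: real)" by (rule int_ind) simp
      show "integrable M (\<lambda>x. indicator {lam..} x * exp (-t*x))"
        by (rule fm.integrable_const_bound[where B=1]) (use t0 lpos in \<open>auto simp: indicator_def mult_nonneg_nonneg\<close>)
    qed
    fix x :: real
    show "indicator {0<..} x * exp (- t * x) \<le> indicator {..<lam} x + indicator {lam..} x * exp (-t*x)"
    proof (cases "x > 0")
      case True
      then have "exp (- t * x) \<le> 1" using t0 by (simp add: mult_nonneg_nonneg)
      then show ?thesis using True by (auto simp: indicator_def)
    qed (auto simp: indicator_def)
  qed
  also have "\<dots> = integral\<^sup>L M (\<lambda>x. indicator {..<lam} x) + integral\<^sup>L M (\<lambda>x. indicator {lam..} x * exp (-t*x))"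
  proof (rule Bochner_Integration.integral_add)
    show "integrable M (\<lambda>x. indicator {..<lam} x :: real)" by (rule int_ind) simp
    show "integrable M (\<lambda>x. indicator {lam..} x * exp (-t*x))"
      by (rule fm.integrable_const_bound[where B=1]) (use t0 lpos in \<open>auto simp: indicator_def mult_nonneg_nonneg\<close>)
  qed
  also have "integral\<^sup>L M (\<lambda>x. indicator {..<lam} x) = measure M {..<lam}"
    using int_ind_c[of "{..<lam}" 1] by simp
  finally have "LV V t \<le> c + (A + \<alpha>) / (A * exp (A * \<alpha>))" using mI tail' by linarith
  moreover have "c + (A + \<alpha>) / (A * exp (A * \<alpha>)) > 0" using assms(1,3) apos by (simp add: add_pos_pos)
  ultimately have "TV V (c + (A + \<alpha>) / (A * exp (A * \<alpha>))) \<le> t" using TV_le t0 by blast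
  then show "TV V (c + (A + \<alpha>) / (A * exp (A * \<alpha>))) \<le> tauV V c * (\<alpha> + A) / \<alpha>"
    by (simp add: t_def \<tau>_def)
qed

lemma claimB:
  assumes "0 < c" "c < L" "A > 0"
  defines "\<alpha> \<equiv> sqrt (tauV V c * lamV V c)"
  shows "\<alpha> / (\<alpha> + A) * TV V (c + (A + \<alpha>) / (A * exp (A * \<alpha>))) \<le> tauV V c"
proof -
  note b = claimB'[OF assms(1,2,3), folded \<alpha>_def]
  have p: "\<alpha> / (\<alpha> + A) > 0" using b(1) assms(3) by simp
  have "\<alpha> / (\<alpha> + A) * TV V (c + (A + \<alpha>) / (A * exp (A * \<alpha>))) \<le> \<alpha> / (\<alpha> + A) * (tauV V c * (\<alpha> + A) / \<alpha>)"
    using b(2) p by (intro mult_left_mono) auto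
  also have "\<dots> = tauV V c"
  proof -
    have nz: "A * \<alpha> + \<alpha> * \<alpha> \<noteq> 0" "\<alpha> + A \<noteq> 0" "\<alpha> \<noteq> 0" using b(1) assms(3)
      by (auto simp: add_pos_pos intro!: less_imp_neq[symmetric] add_pos_pos)
    then show ?thesis by (simp add: field_simps)
  qed
  finally show ?thesis .
qed

lemma claimC:
  assumes "0 < eps" "0 < c1" "c1 < L" "0 < c2" "c2 < L" "B > 0"
  shows "TV V (c1 + c2 * exp (- TV V eps * lamV V c1) + 2 * eps * exp (- B))
              \<le> TV V eps + 2 * B / lamV V c2"
proof -
  define T0 where "T0 = TV V eps"
  define l1 where "l1 = lamV V c1"
  define l2 where "l2 = lamV V c2"
  note lp1 = lam_props[OF assms(2,3), folded l1_def]
  note lp2 = lam_props[OF assms(4,5), folded l2_def]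
  have T0: "T0 \<ge> 0" "LV V T0 \<le> eps" using TV_props[OF assms(1)] by (auto simp: T0_def)
  define t where "t = T0 + 2 * B / l2"
  have sp: "2 * B / l2 > 0" using assms(6) lp2(1) by simp
  have t0: "t \<ge> 0" using T0 sp by (simp add: t_def)
  define K where "K = exp (- T0 * l1)"
  have Kpos: "K > 0" by (simp add: K_def)
  have i1: "integrable M (\<lambda>x. indicator {..<l1} x :: real)" by (rule int_ind) simp
  have i2: "integrable M (\<lambda>x. indicator {..<l2} x * K)" using int_ind[of "{..<l2}"] by simp
  have i3: "integrable M (\<lambda>x. indicator {0<..} x * exp (- T0 * x) * exp (-2*B))"
    using int_LV[OF T0(1)] by simp
  have "LV V t \<le> integral\<^sup>L M (\<lambda>x. indicator {..<l1} x + indicator {..<l2} x * K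
        + indicator {0<..} x * exp (- T0 * x) * exp (-2*B))"
    unfolding LV_eq
  proof (rule integral_mono)
    show "integrable M (\<lambda>x. indicator {0<..} x * exp (- t * x))" by (rule int_LV[OF t0])
    show "integrable M (\<lambda>x. indicator {..<l1} x + indicator {..<l2} x * K
        + indicator {0<..} x * exp (- T0 * x) * exp (-2*B))"
      using i1 i2 i3 by (intro Bochner_Integration.integrable_add)
    fix x :: real
    have nn: "0 \<le> (indicator {..<l1} x :: real)" "0 \<le> indicator {..<l2} x * K"
      "0 \<le> indicator {0<..} x * exp (- T0 * x) * exp (-2*B)" using Kpos by auto
    show "indicator {0<..} x * exp (- t * x) \<le> indicator {..<l1} x + indicator {..<l2} x * K
        + indicator {0<..} x * exp (- T0 * x) * exp (-2*B)"
    proof (cases "x > 0")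
      case False
      then show ?thesis using nn by (auto simp: indicator_def)
    next
      case xpos: True
      show ?thesis
      proof (cases "x < l1")
        case True
        have "exp (- t * x) \<le> 1" using t0 xpos by (simp add: mult_nonneg_nonneg)
        moreover have ie: "indicator {..<l1} x = (1::real)" "indicator {0<..} x = (1::real)" using True xpos by auto
        ultimately show ?thesis using nn by (simp only: ie mult_1_left; linarith)
      next
        case nl1: False
        have "T0 \<le> t" using sp by (simp add: t_def)
        then have "T0 * x \<le> t * x" using xpos by (intro mult_right_mono) auto
        then have a: "exp (- t * x) \<le> exp (- T0 * x)" by simp
        show ?thesis
        proof (cases "x < l2")
          case True
          have "exp (- T0 * x) \<le> K" unfolding K_def using nl1 T0(1)
            by (simp add: mult_left_mono)
          moreover have ie: "indicator {..<l2} x = (1::real)" "indicator {0<..} x = (1::real)" using True xpos by auto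
          ultimately show ?thesis using nn a by (simp only: ie mult_1_left; linarith)
        next
          case False
          have "2 * B = (2 * B / l2) * l2" using lp2(1) by simp
          also have "\<dots> \<le> (2 * B / l2) * x" using False sp by (intro mult_left_mono) auto
          finally have b: "2 * B \<le> (2 * B / l2) * x" .
          have "exp (- t * x) = exp (- T0 * x) * exp (- ((2 * B / l2) * x))"
            by (simp add: t_def exp_add[symmetric] algebra_simps)
          also have "\<dots> \<le> exp (- T0 * x) * exp (-2*B)"
            using b by (intro mult_left_mono) auto
          moreover have ie: "indicator {0<..} x = (1::real)" using xpos by auto
          ultimately show ?thesis using nn by (simp only: ie mult_1_left; linarith)
        qed
      qed
    qed
  qed
  also have "\<dots> = integral\<^sup>L M (\<lambda>x. indicator {..<l1} x) + integral\<^sup>L M (\<lambda>x. indicator {..<l2} x * K)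
        + integral\<^sup>L M (\<lambda>x. indicator {0<..} x * exp (- T0 * x) * exp (-2*B))"
    using i1 i2 i3 by (simp add: Bochner_Integration.integral_add Bochner_Integration.integrable_add)
  also have "\<dots> = measure M {..<l1} + measure M {..<l2} * K + LV V T0 * exp (-2*B)"
    using int_ind_c[of "{..<l1}" 1] int_ind_c[of "{..<l2}" K] by (simp add: LV_eq integral_mult_left_zero)
  also have "\<dots> \<le> c1 + c2 * K + eps * exp (-2*B)"
  proof -
    have "measure M {..<l1} \<le> c1" using M_Iio[OF lp1(1), of c1] lp1(3) assms(2) by simp
    moreover have "measure M {..<l2} * K \<le> c2 * K" using M_Iio[OF lp2(1), of c2] lp2(3) assms(4) Kpos
      by (intro mult_right_mono) auto
    moreover have "LV V T0 * exp (-2*B) \<le> eps * exp (-2*B)" using T0(2) by simp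
    ultimately show ?thesis by linarith
  qed
  also have "\<dots> \<le> c1 + c2 * K + 2 * eps * exp (- B)"
  proof -
    have "exp (-2*B) \<le> exp (- B)" using assms(6) by simp
    also have "\<dots> \<le> 2 * exp (- B)" by simp
    finally have "eps * exp (-2*B) \<le> eps * (2 * exp (- B))" using assms(1) by (intro mult_left_mono) auto
    then show ?thesis by simp
  qed
  finally have LVt: "LV V t \<le> c1 + c2 * K + 2 * eps * exp (- B)" .
  have "c1 + c2 * K + 2 * eps * exp (- B) > 0" using assms Kpos by (simp add: add_pos_pos)
  then have "TV V (c1 + c2 * K + 2 * eps * exp (- B)) \<le> t" using TV_le t0 LVt by blast
  then show ?thesis by (simp add: t_def T0_def K_def l1_def l2_def)
qed

lemma claimD:
  assumes d: "0 < \<delta>" "\<delta> < min L 1 / 2"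
  shows "tauV V (2 * \<delta>) \<le> TV V \<delta>" "TV V \<delta> \<le> 6 / \<delta>\<^sup>2 * tauV V (\<delta> / 2)"
proof -
  have dL: "2 * \<delta> < L" "\<delta> < 1/2" using d by auto
  have "tauV V (2 * \<delta>) \<le> TV V (2 * \<delta> / (1 + 2 * \<delta>))" using claimA[of "2*\<delta>"] d dL by simp
  also have "\<dots> \<le> TV V \<delta>"
  proof (rule TV_anti)
    show "0 < \<delta>" by (rule d(1))
    show "\<delta> \<le> 2 * \<delta> / (1 + 2 * \<delta>)" using d dL by (simp add: field_simps)
  qed
  finally show "tauV V (2 * \<delta>) \<le> TV V \<delta>" .
  define c where "c = \<delta> / 2"
  have c: "0 < c" "c < L" using d dL by (auto simp: c_def)
  define \<alpha> where "\<alpha> = sqrt (tauV V c * lamV V c)"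
  define r where "r = 6 / \<delta>^2"
  define A where "A = (r - 1) * \<alpha>"
  note lp = lam_props[OF c]
  note tp = tau_props[OF c]
  have apos: "\<alpha> > 0" using claimB'(1)[OF c, of 1] by (simp add: \<alpha>_def)
  have r24: "r > 1"
  proof -
    have "\<delta> * \<delta> < 1 * 1" using d dL by (intro mult_strict_mono) auto
    then have "\<delta>^2 < 1" by (simp add: power2_eq_square)
    then show ?thesis using d by (simp add: r_def field_simps)
  qed
  have Apos: "A > 0" using r24 apos by (simp add: A_def)
  have asq: "\<alpha> * \<alpha> = tauV V c * lamV V c" using tp(3) lp(1) by (simp add: \<alpha>_def)
  have "ln (1 + V (lamV V c)) \<le> tauV V c * lamV V c"
    using tp(1)[of "lamV V c"] lp(1) by (simp add: pos_divide_le_eq)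
  moreover have "ln (1 + c) \<le> ln (1 + V (lamV V c))" using lp(2) c by simp
  moreover have "c / (1 + c) \<le> ln (1 + c)" by (rule ln_lower[OF c(1)])
  moreover have "2 * \<delta> / 5 \<le> c / (1 + c)" using d dL by (simp add: c_def field_simps)
  ultimately have xb: "\<alpha> * \<alpha> \<ge> 2 * \<delta> / 5" using asq by linarith
  have "((6/\<delta>^2) / (6/\<delta>^2 - 1)) / exp ((6/\<delta>^2 - 1) * (\<alpha> * \<alpha>)) \<le> \<delta>/2"
    by (rule aux_exp[OF d(1) dL(2) xb])
  moreover have "(A + \<alpha>) / (A * exp (A * \<alpha>)) = ((6/\<delta>^2) / (6/\<delta>^2 - 1)) / exp ((6/\<delta>^2 - 1) * (\<alpha> * \<alpha>))"
  proof -
    have e1: "A + \<alpha> = r * \<alpha>" by (simp add: A_def algebra_simps)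
    have e2: "A * \<alpha> = (r - 1) * (\<alpha> * \<alpha>)" by (simp add: A_def)
    define E where "E = exp ((r - 1) * (\<alpha> * \<alpha>))"
    have "(A + \<alpha>) / (A * exp (A * \<alpha>)) = (r * \<alpha>) / (((r - 1) * E) * \<alpha>)"
      unfolding e1 e2 E_def[symmetric] by (simp add: A_def ac_simps)
    also have "\<dots> = r / ((r - 1) * E)" using apos by (rule mult_divide_mult_cancel_right[OF less_imp_neq[symmetric]])
    also have "\<dots> = (r / (r - 1)) / E" by simp
    finally show ?thesis unfolding E_def r_def .
  qed
  ultimately have small: "(A + \<alpha>) / (A * exp (A * \<alpha>)) \<le> \<delta>/2" by simp
  have "TV V \<delta> \<le> TV V (c + (A + \<alpha>) / (A * exp (A * \<alpha>)))"
  proof (rule TV_anti)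
    show "0 < c + (A + \<alpha>) / (A * exp (A * \<alpha>))" using c Apos apos by (simp add: add_pos_pos)
    show "c + (A + \<alpha>) / (A * exp (A * \<alpha>)) \<le> \<delta>" using small unfolding c_def by linarith
  qed
  also have "\<dots> \<le> tauV V c * (\<alpha> + A) / \<alpha>"
    using claimB'(2)[OF c Apos] by (simp add: \<alpha>_def)
  also have "tauV V c * (\<alpha> + A) / \<alpha> = 6 / \<delta>\<^sup>2 * tauV V (\<delta> / 2)"
  proof -
    have e1: "\<alpha> + A = r * \<alpha>" by (simp add: A_def algebra_simps)
    have "tauV V c * (\<alpha> + A) / \<alpha> = tauV V c * r * (\<alpha> / \<alpha>)" unfolding e1 by simp
    also have "\<dots> = tauV V c * r" using apos by simp
    finally show ?thesis by (simp add: r_def c_def)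
  qed
  finally show "TV V \<delta> \<le> 6 / \<delta>\<^sup>2 * tauV V (\<delta> / 2)" .
qed

end

theorem proposition2p6:
  fixes V :: "real \<Rightarrow> real" and eps c c1 c2 :: real
  assumes "classV V"
    and "0 < eps" "eps < LV V 0"
    and "0 < c" "c < LV V 0"
    and "0 < c1" "c1 < LV V 0"
    and "0 < c2" "c2 < LV V 0"
  defines "\<alpha> \<equiv> sqrt (tauV V c * lamV V c)"
  shows "(\<forall>A>0. \<alpha> / (\<alpha> + A) * TV V (c + (A + \<alpha>) / (A * exp (A * \<alpha>))) \<le> tauV V c)
    \<and> tauV V c \<le> TV V (c / (1 + c))
    \<and> (\<forall>B>0. TV V (c1 + c2 * exp (- TV V eps * lamV V c1) + 2 * eps * exp (- B))
              \<le> TV V eps + 2 * B / lamV V c2)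
    \<and> (\<forall>\<delta>. 0 < \<delta> \<and> \<delta> < min (LV V 0) 1 / 2 \<longrightarrow>
          tauV V (2 * \<delta>) \<le> TV V \<delta> \<and> TV V \<delta> \<le> 6 / \<delta>\<^sup>2 * tauV V (\<delta> / 2))"
proof -
  interpret VV V by (rule VV.intro) (rule assms(1))
  have L0: "LV V 0 = L" by (rule LV0)
  have c: "0 < c" "c < L" using assms(4,5) L0 by auto
  have p1: "\<forall>A>0. \<alpha> / (\<alpha> + A) * TV V (c + (A + \<alpha>) / (A * exp (A * \<alpha>))) \<le> tauV V c"
    using claimB[OF c] unfolding \<alpha>_def by blast
  have p2: "tauV V c \<le> TV V (c / (1 + c))" by (rule claimA[OF c])
  have p3: "\<forall>B>0. TV V (c1 + c2 * exp (- TV V eps * lamV V c1) + 2 * eps * exp (- B))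
              \<le> TV V eps + 2 * B / lamV V c2"
    using claimC[of eps c1 c2] assms(2,6,7,8,9) L0 by auto
  have p4: "\<forall>\<delta>. 0 < \<delta> \<and> \<delta> < min (LV V 0) 1 / 2 \<longrightarrow>
          tauV V (2 * \<delta>) \<le> TV V \<delta> \<and> TV V \<delta> \<le> 6 / \<delta>\<^sup>2 * tauV V (\<delta> / 2)"
    using claimD L0 by auto
  show ?thesis using p1 p2 p3 p4 by blast
qed

end
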